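(* Let $0<\alpha<\eta$. Let $D\subseteq\mathbb R^d$ and $x,y\in D$, $x\ne y$, be such that $y+\sum_{j=1}^d(\rho_j\,d(x,y))^{\mathfrak s_j}\mathbf e_j\in D$ for all $\rho=(\rho_1,\dots,\rho_d)\in\mathbb N^d$. Assume $U$ is a germ over $D$ with $\|U\|_{G^\eta(D)}+[U]_{G^{\eta,\alpha}(D)}<\infty$, and let $(\nu_\beta)_{|\beta|\le\eta}\subset\mathbb R$; for $z\in D$ write $P(z):=\sum_{|\beta|\le\eta}\nu_\beta(z-y)^\beta$. If there is $C\ge1$ such that for all $z\in D$ $$|(U_x-U_y-P)(z)|\le C[U]_{G^{\eta,\alpha}(D)}\,d(y,z)^\alpha\big(d(x,y)+d(y,z)\big)^{\eta-\alpha},$$ then for all $|\beta|\le\eta$ it holds $|\nu_\beta|\lesssim_{\mathfrak s,d,\eta,\alpha}\big(\|U\|_{G^\eta(D)}+C[U]_{G^{\eta,\alpha}(D)}\big)d(x,y)^{\eta-|\beta|}$.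
   Context: Fix a scaling $\mathfrak s\in\mathbb N^d$; $\mathbb N=\{1,2,\dots\}$; for $\beta\in\mathbb N_0^d$, $|\beta|:=\sum_i\mathfrak s_i\beta_i$ and $z^\beta:=\prod_i z_i^{\beta_i}$; $d(x,y):=\sum_i|x_i-y_i|^{1/\mathfrak s_i}$; $\mathcal P_k$ the polynomials $\sum_{|\beta|\le k}c_\beta z^\beta$. A germ over $D$ is a family $U=(U_x)_{x\in D}$ of continuous $U_x:D\to\mathbb C$; $\|U\|_{G^\eta(D)}$ is the infimum of $M>0$ with $|U_x(y)|\le M\,d(x,y)^\eta$ for all $x,y\in D$; $[U]_{G^{\eta,\alpha}(D)}$ is the infimum of $M>0$ such that for all $x,y\in D$ there is $Q\in\mathcal P_{\lfloor\eta\rfloor}$ with $|(U_x-U_y-Q)(z)|\le M\,d(y,z)^\alpha(d(x,y)+d(y,z))^{\eta-\alpha}$ for all $z\in D$. *)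

theory Defs
  imports "HOL-Analysis.Analysis"
begin

text \<open>Points of R^d are vectors real^'n (d = CARD('n)); the scaling is s :: 'n => nat
  (assumed >= 1 componentwise); multi-indices are 'n => nat.\<close>

definition sdeg :: "('n::finite \<Rightarrow> nat) \<Rightarrow> ('n \<Rightarrow> nat) \<Rightarrow> nat" where
  "sdeg s \<beta> = (\<Sum>i\<in>UNIV. s i * \<beta> i)"

definition mono_pow :: "real^'n::finite \<Rightarrow> ('n \<Rightarrow> nat) \<Rightarrow> real" where
  "mono_pow z \<beta> = (\<Prod>i\<in>UNIV. (z $ i) ^ \<beta> i)"

definition sdist :: "('n::finite \<Rightarrow> nat) \<Rightarrow> real^'n \<Rightarrow> real^'n \<Rightarrow> real" where
  "sdist s x y = (\<Sum>i\<in>UNIV. \<bar>x $ i - y $ i\<bar> powr (1 / real (s i)))"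

definition midx :: "('n::finite \<Rightarrow> nat) \<Rightarrow> real \<Rightarrow> ('n \<Rightarrow> nat) set" where
  "midx s k = {\<beta>. real (sdeg s \<beta>) \<le> k}"

definition is_spoly :: "('n::finite \<Rightarrow> nat) \<Rightarrow> nat \<Rightarrow> (real^'n \<Rightarrow> complex) \<Rightarrow> bool" where
  "is_spoly s k Q \<longleftrightarrow> (\<exists>c :: ('n \<Rightarrow> nat) \<Rightarrow> complex.
      \<forall>z. Q z = (\<Sum>\<beta>\<in>{\<beta>. sdeg s \<beta> \<le> k}. c \<beta> * of_real (mono_pow z \<beta>)))"

definition is_germ :: "(real^'n) set \<Rightarrow> (real^'n \<Rightarrow> real^'n \<Rightarrow> complex) \<Rightarrow> bool" where
  "is_germ D U \<longleftrightarrow> (\<forall>x\<in>D. continuous_on D (U x))"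

definition germ_norm_set :: "('n::finite \<Rightarrow> nat) \<Rightarrow> real \<Rightarrow> (real^'n) set
    \<Rightarrow> (real^'n \<Rightarrow> real^'n \<Rightarrow> complex) \<Rightarrow> real set" where
  "germ_norm_set s \<eta> D U = {M. M > 0 \<and>
     (\<forall>x\<in>D. \<forall>y\<in>D. cmod (U x y) \<le> M * sdist s x y powr \<eta>)}"

definition germ_norm :: "('n::finite \<Rightarrow> nat) \<Rightarrow> real \<Rightarrow> (real^'n) set
    \<Rightarrow> (real^'n \<Rightarrow> real^'n \<Rightarrow> complex) \<Rightarrow> real" where
  "germ_norm s \<eta> D U = Inf (germ_norm_set s \<eta> D U)"

definition germ_semi_set :: "('n::finite \<Rightarrow> nat) \<Rightarrow> real \<Rightarrow> real \<Rightarrow> (real^'n) set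
    \<Rightarrow> (real^'n \<Rightarrow> real^'n \<Rightarrow> complex) \<Rightarrow> real set" where
  "germ_semi_set s \<eta> \<alpha> D U = {M. M > 0 \<and>
     (\<forall>x\<in>D. \<forall>y\<in>D. \<exists>Q. is_spoly s (nat \<lfloor>\<eta>\<rfloor>) Q \<and>
        (\<forall>z\<in>D. cmod (U x z - U y z - Q z)
           \<le> M * sdist s y z powr \<alpha> * (sdist s x y + sdist s y z) powr (\<eta> - \<alpha>)))}"

definition germ_semi :: "('n::finite \<Rightarrow> nat) \<Rightarrow> real \<Rightarrow> real \<Rightarrow> (real^'n) set
    \<Rightarrow> (real^'n \<Rightarrow> real^'n \<Rightarrow> complex) \<Rightarrow> real" where
  "germ_semi s \<eta> \<alpha> D U = Inf (germ_semi_set s \<eta> \<alpha> D U)"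

end

theory Submission imports Defs "HOL-Computational_Algebra.Polynomial" begin

lemma pow_add_ge:
  fixes u v :: real assumes "u \<ge> 0" "v \<ge> 0" "n \<ge> 1"
  shows "u ^ n + v ^ n \<le> (u + v) ^ n"
  using assms(3)
proof (induction n rule: dec_induct)
  case base then show ?case by simp
next
  case (step n)
  have "u ^ Suc n + v ^ Suc n \<le> (u + v) * (u ^ n + v ^ n)"
    using assms by (simp add: algebra_simps)
  also have "\<dots> \<le> (u + v) * (u + v) ^ n"
    using step assms by (intro mult_left_mono) auto
  finally show ?case by simp
qed

lemma powr_inv_pow:
  fixes a :: real assumes "a \<ge> 0" "n \<ge> 1"
  shows "(a powr (1 / real n)) ^ n = a"
proof (cases "a = 0")
  case True then show ?thesis using assms by simp
next
  case False
  then have "a > 0" using assms by simp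
  then have "(a powr (1 / real n)) ^ n = (a powr (1 / real n)) powr (real n)"
    by (simp add: powr_realpow)
  also have "\<dots> = a" using assms by (simp add: powr_powr)
  finally show ?thesis .
qed

lemma pow_powr_inv:
  fixes a :: real assumes "a \<ge> 0" "n \<ge> 1"
  shows "(a ^ n) powr (1 / real n) = a"
proof (cases "a = 0")
  case True then show ?thesis using assms by simp
next
  case False
  then have "a > 0" using assms by simp
  then have "a ^ n = a powr (real n)" by (simp add: powr_realpow)
  then show ?thesis using assms \<open>a > 0\<close> by (simp add: powr_powr)
qed

lemma root_subadd:
  fixes a b :: real assumes "a \<ge> 0" "b \<ge> 0" "n \<ge> 1"
  shows "(a + b) powr (1 / real n) \<le> a powr (1 / real n) + b powr (1 / real n)"
proof -
  define u where "u = a powr (1 / real n)"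
  define v where "v = b powr (1 / real n)"
  have u0: "u \<ge> 0" "v \<ge> 0" by (auto simp: u_def v_def)
  have "a + b = u ^ n + v ^ n" using assms by (simp add: u_def v_def powr_inv_pow)
  also have "\<dots> \<le> (u + v) ^ n" by (rule pow_add_ge[OF u0 assms(3)])
  finally have "(a + b) powr (1 / real n) \<le> ((u + v) ^ n) powr (1 / real n)"
    using assms by (intro powr_mono2) auto
  also have "\<dots> = u + v" using u0 assms by (simp add: pow_powr_inv)
  finally show ?thesis by (simp add: u_def v_def)
qed

lemma sdist_tri:
  fixes s :: "'n::finite \<Rightarrow> nat"
  assumes "\<forall>i. s i \<ge> 1"
  shows "sdist s x z \<le> sdist s x y + sdist s y z"
proof -
  have "\<bar>x $ i - z $ i\<bar> powr (1 / real (s i)) \<le>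
      \<bar>x $ i - y $ i\<bar> powr (1 / real (s i)) + \<bar>y $ i - z $ i\<bar> powr (1 / real (s i))" for i
  proof -
    have "\<bar>x $ i - z $ i\<bar> powr (1 / real (s i)) \<le> (\<bar>x $ i - y $ i\<bar> + \<bar>y $ i - z $ i\<bar>) powr (1 / real (s i))"
      by (intro powr_mono2) auto
    also have "\<dots> \<le> \<bar>x $ i - y $ i\<bar> powr (1 / real (s i)) + \<bar>y $ i - z $ i\<bar> powr (1 / real (s i))"
      using assms by (intro root_subadd) auto
    finally show ?thesis .
  qed
  then show ?thesis unfolding sdist_def by (simp add: sum.distrib[symmetric] sum_mono)
qed

lemma sdist_nonneg: "sdist s x y \<ge> 0"
  unfolding sdist_def by (intro sum_nonneg) auto

lemma sdist_pos:
  assumes "x \<noteq> y" shows "sdist s x y > 0"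
proof -
  obtain i where "x $ i \<noteq> y $ i" using assms by (metis vec_eq_iff)
  then have "\<bar>x $ i - y $ i\<bar> powr (1 / real (s i)) > 0" by simp
  also have "\<dots> \<le> sdist s x y" unfolding sdist_def
    by (rule member_le_sum) auto
  finally show ?thesis .
qed

lemma dual_exists:
  fixes \<phi> :: "'b \<Rightarrow> 'c \<Rightarrow> real"
  assumes "finite B" "finite S"
    and "\<And>c. (\<forall>\<rho>\<in>S. (\<Sum>\<beta>\<in>B. c \<beta> * \<phi> \<beta> \<rho>) = 0) \<Longrightarrow> (\<forall>\<beta>\<in>B. c \<beta> = 0)"
  shows "\<exists>l. \<forall>b\<in>B. \<forall>\<beta>\<in>B. (\<Sum>\<rho>\<in>S. l b \<rho> * \<phi> \<beta> \<rho>) = (if \<beta> = b then 1 else 0)"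
  using assms(1,3)
proof (induction B rule: finite_induct)
  case empty then show ?case by simp
next
  case (insert c F)
  have indF: "\<forall>\<beta>\<in>F. k \<beta> = 0" if "\<forall>\<rho>\<in>S. (\<Sum>\<beta>\<in>F. k \<beta> * \<phi> \<beta> \<rho>) = 0" for k
  proof -
    have "\<forall>\<rho>\<in>S. (\<Sum>\<beta>\<in>insert c F. (k(c := 0)) \<beta> * \<phi> \<beta> \<rho>) = 0"
      
    proof
      fix \<rho> assume "\<rho> \<in> S"
      have "(\<Sum>\<beta>\<in>insert c F. (k(c := 0)) \<beta> * \<phi> \<beta> \<rho>) = (\<Sum>\<beta>\<in>F. (k(c := 0)) \<beta> * \<phi> \<beta> \<rho>)"
        using insert(1,2) by (simp add: sum.insert)
      also have "\<dots> = (\<Sum>\<beta>\<in>F. k \<beta> * \<phi> \<beta> \<rho>)"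
        using insert(2) by (intro sum.cong) auto
      finally show "(\<Sum>\<beta>\<in>insert c F. (k(c := 0)) \<beta> * \<phi> \<beta> \<rho>) = 0" using that \<open>\<rho> \<in> S\<close> by simp
    qed
    then have h: "\<forall>\<beta>\<in>insert c F. (k(c := 0)) \<beta> = 0" by (rule insert.prems)
    show ?thesis
    proof
      fix \<beta> assume "\<beta> \<in> F"
      then have "\<beta> \<noteq> c" using insert(2) by auto
      with h \<open>\<beta> \<in> F\<close> show "k \<beta> = 0" by (metis fun_upd_other insertCI)
    qed
  qed
  then obtain l where l: "\<forall>b\<in>F. \<forall>\<beta>\<in>F. (\<Sum>\<rho>\<in>S. l b \<rho> * \<phi> \<beta> \<rho>) = (if \<beta> = b then 1 else 0)"
    using insert.IH by blast
  define a where "a b = (\<Sum>\<rho>\<in>S. l b \<rho> * \<phi> c \<rho>)" for b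
  define \<psi> where "\<psi> \<rho> = \<phi> c \<rho> - (\<Sum>b\<in>F. a b * \<phi> b \<rho>)" for \<rho>
  have "\<exists>\<rho>0\<in>S. \<psi> \<rho>0 \<noteq> 0"
  proof (rule ccontr)
    assume nz: "\<not> ?thesis"
    define k where "k \<beta> = (if \<beta> = c then 1 else - a \<beta>)" for \<beta>
    have "\<forall>\<rho>\<in>S. (\<Sum>\<beta>\<in>insert c F. k \<beta> * \<phi> \<beta> \<rho>) = 0"
    proof
      fix \<rho> assume "\<rho> \<in> S"
      have "(\<Sum>\<beta>\<in>insert c F. k \<beta> * \<phi> \<beta> \<rho>) = \<phi> c \<rho> + (\<Sum>\<beta>\<in>F. - a \<beta> * \<phi> \<beta> \<rho>)"
        
      proof -
        have "(\<Sum>\<beta>\<in>insert c F. k \<beta> * \<phi> \<beta> \<rho>) = k c * \<phi> c \<rho> + (\<Sum>\<beta>\<in>F. k \<beta> * \<phi> \<beta> \<rho>)"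
          using insert(1,2) by (simp add: sum.insert)
        also have "(\<Sum>\<beta>\<in>F. k \<beta> * \<phi> \<beta> \<rho>) = (\<Sum>\<beta>\<in>F. - a \<beta> * \<phi> \<beta> \<rho>)"
          using insert(2) by (intro sum.cong) (auto simp: k_def)
        finally show ?thesis by (simp add: k_def)
      qed
      also have "\<dots> = \<psi> \<rho>" by (simp add: \<psi>_def sum_negf)
      finally show "(\<Sum>\<beta>\<in>insert c F. k \<beta> * \<phi> \<beta> \<rho>) = 0" using nz \<open>\<rho> \<in> S\<close> by auto
    qed
    then have "k c = 0" using insert.prems by blast
    then show False by (simp add: k_def)
  qed
  then obtain \<rho>0 where \<rho>0: "\<rho>0 \<in> S" "\<psi> \<rho>0 \<noteq> 0" by blast
  define lc where "lc \<rho> = ((if \<rho> = \<rho>0 then 1 else 0) - (\<Sum>b\<in>F. l b \<rho> * \<phi> b \<rho>0)) / \<psi> \<rho>0" for \<rho>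
  have lc_eq: "(\<Sum>\<rho>\<in>S. lc \<rho> * \<phi> \<beta> \<rho>) = (\<phi> \<beta> \<rho>0 - (\<Sum>b\<in>F. (\<Sum>\<rho>\<in>S. l b \<rho> * \<phi> \<beta> \<rho>) * \<phi> b \<rho>0)) / \<psi> \<rho>0" for \<beta>
  proof -
    have "(\<Sum>\<rho>\<in>S. lc \<rho> * \<phi> \<beta> \<rho>) = ((\<Sum>\<rho>\<in>S. (if \<rho> = \<rho>0 then 1 else 0) * \<phi> \<beta> \<rho>) - (\<Sum>\<rho>\<in>S. \<Sum>b\<in>F. l b \<rho> * \<phi> b \<rho>0 * \<phi> \<beta> \<rho>)) / \<psi> \<rho>0"
      
    proof -
      have "(\<Sum>\<rho>\<in>S. lc \<rho> * \<phi> \<beta> \<rho>) = (\<Sum>\<rho>\<in>S. ((if \<rho> = \<rho>0 then 1 else 0) * \<phi> \<beta> \<rho> - (\<Sum>b\<in>F. l b \<rho> * \<phi> b \<rho>0 * \<phi> \<beta> \<rho>)) / \<psi> \<rho>0)"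
        by (intro sum.cong) (auto simp: lc_def sum_distrib_right left_diff_distrib)
      also have "\<dots> = ((\<Sum>\<rho>\<in>S. (if \<rho> = \<rho>0 then 1 else 0) * \<phi> \<beta> \<rho>) - (\<Sum>\<rho>\<in>S. \<Sum>b\<in>F. l b \<rho> * \<phi> b \<rho>0 * \<phi> \<beta> \<rho>)) / \<psi> \<rho>0"
        by (simp add: sum_divide_distrib[symmetric] sum_subtractf)
      finally show ?thesis .
    qed
    also have "(\<Sum>\<rho>\<in>S. (if \<rho> = \<rho>0 then 1 else 0) * \<phi> \<beta> \<rho>) = \<phi> \<beta> \<rho>0"
      by (subst sum.remove[OF assms(2) \<rho>0(1)]) auto
    also have "(\<Sum>\<rho>\<in>S. \<Sum>b\<in>F. l b \<rho> * \<phi> b \<rho>0 * \<phi> \<beta> \<rho>) = (\<Sum>b\<in>F. (\<Sum>\<rho>\<in>S. l b \<rho> * \<phi> \<beta> \<rho>) * \<phi> b \<rho>0)"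
      by (subst sum.swap) (simp add: sum_distrib_right sum_distrib_left mult_ac)
    finally show ?thesis .
  qed
  have lcF: "(\<Sum>\<rho>\<in>S. lc \<rho> * \<phi> \<beta> \<rho>) = 0" if "\<beta> \<in> F" for \<beta>
  proof -
    have "(\<Sum>b\<in>F. (\<Sum>\<rho>\<in>S. l b \<rho> * \<phi> \<beta> \<rho>) * \<phi> b \<rho>0) = (\<Sum>b\<in>F. (if \<beta> = b then \<phi> b \<rho>0 else 0))"
      using l that by (intro sum.cong) auto
    also have "\<dots> = \<phi> \<beta> \<rho>0" using that insert(1) by simp
    finally show ?thesis using lc_eq by simp
  qed
  have lcc: "(\<Sum>\<rho>\<in>S. lc \<rho> * \<phi> c \<rho>) = 1"
    using lc_eq[of c] \<rho>0 by (simp add: \<psi>_def a_def)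
  define l' where "l' b = (if b = c then lc else (\<lambda>\<rho>. l b \<rho> - a b * lc \<rho>))" for b
  have "\<forall>b\<in>insert c F. \<forall>\<beta>\<in>insert c F. (\<Sum>\<rho>\<in>S. l' b \<rho> * \<phi> \<beta> \<rho>) = (if \<beta> = b then 1 else 0)"
  proof (intro ballI)
    fix b \<beta> assume b: "b \<in> insert c F" and \<beta>: "\<beta> \<in> insert c F"
    show "(\<Sum>\<rho>\<in>S. l' b \<rho> * \<phi> \<beta> \<rho>) = (if \<beta> = b then 1 else 0)"
    proof (cases "b = c")
      case True
      then show ?thesis using \<beta> lcF lcc insert(2) by (auto simp: l'_def)
    next
      case False
      then have bF: "b \<in> F" using b by auto
      have "(\<Sum>\<rho>\<in>S. l' b \<rho> * \<phi> \<beta> \<rho>) = (\<Sum>\<rho>\<in>S. l b \<rho> * \<phi> \<beta> \<rho>) - a b * (\<Sum>\<rho>\<in>S. lc \<rho> * \<phi> \<beta> \<rho>)"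
        using False by (simp add: l'_def sum_subtractf[symmetric] sum_distrib_left algebra_simps)
      then show ?thesis using \<beta> bF lcF lcc l False insert(2) by (auto simp: a_def)
    qed
  qed
  then show ?case by blast
qed

lemma coeff_bound:
  fixes \<phi> :: "'b \<Rightarrow> 'c \<Rightarrow> real"
  assumes "finite B" "finite S"
    and "\<And>c. (\<forall>\<rho>\<in>S. (\<Sum>\<beta>\<in>B. c \<beta> * \<phi> \<beta> \<rho>) = 0) \<Longrightarrow> (\<forall>\<beta>\<in>B. c \<beta> = 0)"
  shows "\<exists>K>0. \<forall>c A. A \<ge> 0 \<longrightarrow> (\<forall>\<rho>\<in>S. \<bar>\<Sum>\<beta>\<in>B. c \<beta> * \<phi> \<beta> \<rho>\<bar> \<le> A) \<longrightarrow> (\<forall>\<beta>\<in>B. \<bar>c \<beta>\<bar> \<le> K * A)"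
proof -
  obtain l where l: "\<forall>b\<in>B. \<forall>\<beta>\<in>B. (\<Sum>\<rho>\<in>S. l b \<rho> * \<phi> \<beta> \<rho>) = (if \<beta> = b then 1 else 0)"
    using dual_exists[OF assms] by blast
  define K where "K = 1 + (\<Sum>b\<in>B. \<Sum>\<rho>\<in>S. \<bar>l b \<rho>\<bar>)"
  have K: "K > 0" unfolding K_def by (intro add_pos_nonneg sum_nonneg) auto
  have "\<bar>c b\<bar> \<le> K * A" if A: "A \<ge> 0" and h: "\<forall>\<rho>\<in>S. \<bar>\<Sum>\<beta>\<in>B. c \<beta> * \<phi> \<beta> \<rho>\<bar> \<le> A" and b: "b \<in> B" for c A b
  proof -
    have "c b = (\<Sum>\<beta>\<in>B. c \<beta> * (if \<beta> = b then 1 else 0))"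
      by (subst sum.remove[OF assms(1) b]) auto
    also have "\<dots> = (\<Sum>\<beta>\<in>B. c \<beta> * (\<Sum>\<rho>\<in>S. l b \<rho> * \<phi> \<beta> \<rho>))"
      using l b by (intro sum.cong) auto
    also have "\<dots> = (\<Sum>\<rho>\<in>S. l b \<rho> * (\<Sum>\<beta>\<in>B. c \<beta> * \<phi> \<beta> \<rho>))"
      by (simp add: sum_distrib_left sum.swap[of _ B] mult_ac)
    finally have "\<bar>c b\<bar> \<le> (\<Sum>\<rho>\<in>S. \<bar>l b \<rho>\<bar> * \<bar>\<Sum>\<beta>\<in>B. c \<beta> * \<phi> \<beta> \<rho>\<bar>)"
      by (metis (no_types, lifting) abs_mult order_refl sum.cong sum_abs)
    also have "\<dots> \<le> (\<Sum>\<rho>\<in>S. \<bar>l b \<rho>\<bar> * A)"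
      using h by (intro sum_mono mult_left_mono) auto
    also have "\<dots> = (\<Sum>\<rho>\<in>S. \<bar>l b \<rho>\<bar>) * A" by (simp add: sum_distrib_right)
    also have "\<dots> \<le> K * A"
    proof (intro mult_right_mono A)
      have "(\<Sum>\<rho>\<in>S. \<bar>l b \<rho>\<bar>) \<le> (\<Sum>b\<in>B. \<Sum>\<rho>\<in>S. \<bar>l b \<rho>\<bar>)"
        using b assms(1) by (intro member_le_sum) (auto intro: sum_nonneg)
      then show "(\<Sum>\<rho>\<in>S. \<bar>l b \<rho>\<bar>) \<le> K" by (simp add: K_def)
    qed
    finally show ?thesis .
  qed
  then show ?thesis using K by blast
qed

lemma univ_indep:
  fixes e :: "'b \<Rightarrow> nat" and c :: "'b \<Rightarrow> real"
  assumes "finite B" "inj_on e B" "\<forall>\<beta>\<in>B. e \<beta> < T"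
    and h: "\<forall>t\<in>{1..T}. (\<Sum>\<beta>\<in>B. c \<beta> * (real t) ^ (e \<beta>)) = 0"
  shows "\<forall>\<beta>\<in>B. c \<beta> = 0"
proof
  fix \<beta>0 assume \<beta>0: "\<beta>0 \<in> B"
  define p where "p = (\<Sum>\<beta>\<in>B. monom (c \<beta>) (e \<beta>))"
  have pev: "poly p x = (\<Sum>\<beta>\<in>B. c \<beta> * x ^ (e \<beta>))" for x
    by (simp add: p_def poly_sum poly_monom)
  have T1: "T \<ge> 1" using assms(3) \<beta>0 by force
  have "p = 0"
  proof (rule ccontr)
    assume "p \<noteq> 0"
    have "degree p \<le> T - 1" unfolding p_def
    proof (intro degree_sum_le)
      show "finite B" by (rule assms(1))
      fix q assume "q \<in> B"
      then show "degree (monom (c q) (e q)) \<le> T - 1"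
        using assms(3) degree_monom_le[of "c q" "e q"] by force
    qed
    have "real ` {1..T} \<subseteq> {x. poly p x = 0}" using h pev by auto
    moreover have "finite {x. poly p x = 0}" using \<open>p \<noteq> 0\<close> by (rule poly_roots_finite)
    ultimately have "card (real ` {1..T}) \<le> card {x. poly p x = 0}" by (rule card_mono[rotated])
    also have "\<dots> \<le> degree p" using \<open>p \<noteq> 0\<close> by (rule card_poly_roots_bound)
    finally have "T \<le> degree p" by (simp add: card_image inj_on_def)
    then show False using \<open>degree p \<le> T - 1\<close> T1 by simp
  qed
  have "coeff p (e \<beta>0) = (\<Sum>\<beta>\<in>B. if e \<beta> = e \<beta>0 then c \<beta> else 0)"
    by (simp add: p_def coeff_sum)
  also have "\<dots> = (\<Sum>\<beta>\<in>B. if \<beta> = \<beta>0 then c \<beta> else 0)"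
    using assms(2) \<beta>0 by (intro sum.cong) (auto simp: inj_on_def)
  also have "\<dots> = c \<beta>0" using assms(1) \<beta>0 by simp
  finally show "c \<beta>0 = 0" using \<open>p = 0\<close> by simp
qed

lemma digits_nat:
  fixes a b :: "nat \<Rightarrow> nat"
  assumes "\<forall>k<d. a k < M \<and> b k < M" "(\<Sum>k<d. a k * M ^ k) = (\<Sum>k<d. b k * M ^ k)"
  shows "\<forall>k<d. a k = b k"
  using assms
proof (induction d arbitrary: a b)
  case 0 then show ?case by simp
next
  case (Suc d)
  have ea: "(\<Sum>k<Suc d. a k * M ^ k) = a 0 + M * (\<Sum>k<d. a (Suc k) * M ^ k)" for a :: "nat \<Rightarrow> nat"
    unfolding sum.lessThan_Suc_shift by (simp add: sum_distrib_left mult_ac)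
  have M: "M > 0" using Suc.prems(1) by auto
  have a0: "a 0 < M" "b 0 < M" using Suc.prems(1) by auto
  have eq: "a 0 + M * (\<Sum>k<d. a (Suc k) * M ^ k) = b 0 + M * (\<Sum>k<d. b (Suc k) * M ^ k)"
    using Suc.prems(2) ea[of a] ea[of b] by simp
  then have "(a 0 + M * (\<Sum>k<d. a (Suc k) * M ^ k)) mod M = (b 0 + M * (\<Sum>k<d. b (Suc k) * M ^ k)) mod M" by simp
  then have h0: "a 0 = b 0" using a0 by simp
  with eq M have "(\<Sum>k<d. a (Suc k) * M ^ k) = (\<Sum>k<d. b (Suc k) * M ^ k)" by simp
  moreover have "\<forall>k<d. a (Suc k) < M \<and> b (Suc k) < M" using Suc.prems(1) by auto
  ultimately have "\<forall>k<d. a (Suc k) = b (Suc k)" using Suc.IH[of "\<lambda>k. a (Suc k)" "\<lambda>k. b (Suc k)"] by blast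
  then show ?case using h0 by (auto simp: less_Suc_eq_0_disj)
qed

lemma digits_fin:
  fixes a b :: "'n::finite \<Rightarrow> nat"
  assumes bij: "bij_betw idx (UNIV::'n set) {..<d}" and "\<forall>i. a i < M" "\<forall>i. b i < M"
    and eq: "(\<Sum>i\<in>UNIV. M ^ (idx i) * a i) = (\<Sum>i\<in>UNIV. M ^ (idx i) * b i)"
  shows "a = b"
proof -
  define g where "g = inv_into UNIV idx"
  have gi: "g (idx i) = i" for i using bij unfolding g_def
    by (simp add: bij_betw_def)
  have re: "(\<Sum>i\<in>UNIV. M ^ (idx i) * f i) = (\<Sum>k<d. f (g k) * M ^ k)" for f :: "'n \<Rightarrow> nat"
  proof -
    have "(\<Sum>k<d. f (g k) * M ^ k) = (\<Sum>i\<in>UNIV. f (g (idx i)) * M ^ (idx i))"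
      using sum.reindex_bij_betw[OF bij, of "\<lambda>k. f (g k) * M ^ k"] by simp
    then show ?thesis by (simp add: gi mult_ac)
  qed
  have "\<forall>k<d. a (g k) = b (g k)"
    using assms(2,3) eq by (intro digits_nat) (auto simp: re)
  moreover have "idx i < d" for i using bij by (auto simp: bij_betw_def)
  ultimately show ?thesis using gi by (metis ext)
qed

lemma midx_finite:
  fixes s :: "'n::finite \<Rightarrow> nat"
  assumes "\<forall>i. s i \<ge> 1"
  shows "finite (midx s \<eta>)"
proof -
  have "midx s \<eta> \<subseteq> PiE UNIV (\<lambda>_. {..nat \<lfloor>\<eta>\<rfloor>})"
  proof
    fix \<beta> assume "\<beta> \<in> midx s \<eta>"
    then have h: "real (sdeg s \<beta>) \<le> \<eta>" by (simp add: midx_def)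
    have "\<beta> i \<le> nat \<lfloor>\<eta>\<rfloor>" for i
    proof -
      have "\<beta> i \<le> s i * \<beta> i" using assms by simp
      also have "\<dots> \<le> sdeg s \<beta>" unfolding sdeg_def by (rule member_le_sum) auto
      finally have "real (\<beta> i) \<le> \<eta>" using h by linarith
      then show ?thesis by linarith
    qed
    then show "\<beta> \<in> PiE UNIV (\<lambda>_. {..nat \<lfloor>\<eta>\<rfloor>})" by auto
  qed
  moreover have "finite (PiE (UNIV::'n set) (\<lambda>_. {..nat \<lfloor>\<eta>\<rfloor>}))" by (intro finite_PiE) auto
  ultimately show ?thesis by (rule finite_subset)
qed

lemma inf_bound:
  assumes "germ_norm_set s \<eta> D U \<noteq> {}" "x \<in> D" "y \<in> D"
  shows "cmod (U x y) \<le> germ_norm s \<eta> D U * sdist s x y powr \<eta>"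
proof (cases "sdist s x y powr \<eta> = 0")
  case True
  obtain M where "M \<in> germ_norm_set s \<eta> D U" using assms by blast
  then have "cmod (U x y) \<le> M * sdist s x y powr \<eta>" using assms by (auto simp: germ_norm_set_def)
  then show ?thesis using True by simp
next
  case False
  then have p: "sdist s x y powr \<eta> > 0" by (metis less_eq_real_def powr_ge_zero)
  have "cmod (U x y) / sdist s x y powr \<eta> \<le> germ_norm s \<eta> D U"
    unfolding germ_norm_def
  proof (rule cInf_greatest[OF assms(1)])
    fix M assume "M \<in> germ_norm_set s \<eta> D U"
    then have "cmod (U x y) \<le> M * sdist s x y powr \<eta>" using assms by (auto simp: germ_norm_set_def)
    then show "cmod (U x y) / sdist s x y powr \<eta> \<le> M" using p by (simp add: divide_le_eq)
  qed
  then show ?thesis using p by (simp add: divide_le_eq)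
qed

lemma norm_nonneg': "germ_norm_set s \<eta> D U \<noteq> {} \<Longrightarrow> germ_norm s \<eta> D U \<ge> 0"
  unfolding germ_norm_def by (rule cInf_greatest) (auto simp: germ_norm_set_def)

lemma semi_nonneg': "germ_semi_set s \<eta> \<alpha> D U \<noteq> {} \<Longrightarrow> germ_semi s \<eta> \<alpha> D U \<ge> 0"
  unfolding germ_semi_def by (rule cInf_greatest) (auto simp: germ_semi_set_def)

theorem lemma3p5:
  fixes s :: "'n::finite \<Rightarrow> nat" and \<eta> \<alpha> :: real
  assumes "\<forall>i. s i \<ge> 1" and "0 < \<alpha>" and "\<alpha> < \<eta>"
  shows "\<exists>K>0. \<forall>(D :: (real^'n) set) x y (U :: real^'n \<Rightarrow> real^'n \<Rightarrow> complex)
            (\<nu> :: ('n \<Rightarrow> nat) \<Rightarrow> real) (C :: real).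
     x \<in> D \<longrightarrow> y \<in> D \<longrightarrow> x \<noteq> y \<longrightarrow>
     (\<forall>\<rho> :: 'n \<Rightarrow> nat. (\<forall>j. \<rho> j \<ge> 1) \<longrightarrow>
        y + (\<chi> j. (real (\<rho> j) * sdist s x y) ^ s j) \<in> D) \<longrightarrow>
     is_germ D U \<longrightarrow>
     germ_norm_set s \<eta> D U \<noteq> {} \<longrightarrow> germ_semi_set s \<eta> \<alpha> D U \<noteq> {} \<longrightarrow>
     C \<ge> 1 \<longrightarrow>
     (\<forall>z\<in>D. cmod (U x z - U y z
          - of_real (\<Sum>\<beta>\<in>midx s \<eta>. \<nu> \<beta> * mono_pow (z - y) \<beta>))
        \<le> C * germ_semi s \<eta> \<alpha> D U * sdist s y z powr \<alpha>
            * (sdist s x y + sdist s y z) powr (\<eta> - \<alpha>)) \<longrightarrow>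
     (\<forall>\<beta>\<in>midx s \<eta>. \<bar>\<nu> \<beta>\<bar> \<le> K * (germ_norm s \<eta> D U + C * germ_semi s \<eta> \<alpha> D U)
        * sdist s x y powr (\<eta> - real (sdeg s \<beta>)))"
proof -
  have s1: "\<forall>i. s i \<ge> 1" by (rule assms(1))
  define N where "N = nat \<lfloor>\<eta>\<rfloor>"
  define M where "M = Suc N"
  obtain idx :: "'n \<Rightarrow> nat" where bij: "bij_betw idx UNIV {..<CARD('n)}"
    using ex_bij_betw_finite_nat[of "UNIV::'n set"] by (auto simp: atLeast0LessThan)
  define w where "w i = M ^ idx i" for i
  define e where "e \<beta> = (\<Sum>i\<in>UNIV. M ^ idx i * (s i * \<beta> i))" for \<beta> :: "'n \<Rightarrow> nat"
  have finB: "finite (midx s \<eta>)" using midx_finite[OF s1] .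
  have sb: "s i * \<beta> i < M" if "\<beta> \<in> midx s \<eta>" for \<beta> i
  proof -
    have h: "real (sdeg s \<beta>) \<le> \<eta>" using that by (simp add: midx_def)
    have "s i * \<beta> i \<le> sdeg s \<beta>" unfolding sdeg_def by (rule member_le_sum) auto
    then have "real (s i * \<beta> i) \<le> \<eta>" using h by linarith
    then have "s i * \<beta> i \<le> N" unfolding N_def by linarith
    then show ?thesis by (simp add: M_def)
  qed
  have inj: "inj_on e (midx s \<eta>)"
  proof (rule inj_onI)
    fix \<beta> \<beta>' assume b: "\<beta> \<in> midx s \<eta>" "\<beta>' \<in> midx s \<eta>" and "e \<beta> = e \<beta>'"
    then have "(\<lambda>i. s i * \<beta> i) = (\<lambda>i. s i * \<beta>' i)"
      using sb by (intro digits_fin[OF bij, of _ M]) (auto simp: e_def)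
    then have "s i * \<beta> i = s i * \<beta>' i" for i by metis
    show "\<beta> = \<beta>'"
    proof
      fix i
      have "s i \<noteq> 0" using s1 by (metis not_one_le_zero)
      then show "\<beta> i = \<beta>' i" using \<open>s i * \<beta> i = s i * \<beta>' i\<close> by simp
    qed
  qed
  define T where "T = Suc (\<Sum>\<beta>\<in>midx s \<eta>. e \<beta>)"
  have eT: "\<forall>\<beta>\<in>midx s \<eta>. e \<beta> < T"
  proof
    fix \<beta> assume "\<beta> \<in> midx s \<eta>"
    then have "e \<beta> \<le> (\<Sum>\<beta>\<in>midx s \<eta>. e \<beta>)" using finB by (intro member_le_sum) auto
    then show "e \<beta> < T" by (simp add: T_def)
  qed
  define \<phi> where "\<phi> \<beta> t = real t ^ e \<beta>" for \<beta> :: "'n \<Rightarrow> nat" and t :: nat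
  have indep: "\<forall>\<beta>\<in>midx s \<eta>. c \<beta> = 0" if "\<forall>t\<in>{1..T}. (\<Sum>\<beta>\<in>midx s \<eta>. c \<beta> * \<phi> \<beta> t) = 0" for c
    using univ_indep[OF finB inj eT] that by (simp add: \<phi>_def)
  obtain K0 where K0: "K0 > 0" and K0b: "\<And>c A. A \<ge> 0 \<Longrightarrow> (\<forall>t\<in>{1..T}. \<bar>\<Sum>\<beta>\<in>midx s \<eta>. c \<beta> * \<phi> \<beta> t\<bar> \<le> A)
       \<Longrightarrow> (\<forall>\<beta>\<in>midx s \<eta>. \<bar>c \<beta>\<bar> \<le> K0 * A)"
    using coeff_bound[OF finB finite_atLeastAtMost[of "1::nat" T], of \<phi>] indep by blast
  define R where "R t = (\<Sum>j\<in>UNIV. t ^ w j)" for t :: nat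
  define G where "G = (\<Sum>t\<in>{1..T}. (1 + real (R t)) powr \<eta>)"
  have G: "(1 + real (R t)) powr \<eta> \<le> G" if "t \<in> {1..T}" for t
    unfolding G_def using that by (intro member_le_sum) auto
  have G0: "G \<ge> 0" unfolding G_def by (intro sum_nonneg) auto
  define K where "K = 2 * K0 * (G + 1)"
  have Kpos: "K > 0" using K0 G0 by (simp add: K_def)
  show ?thesis
  proof (intro exI[of _ K] conjI allI impI ballI Kpos)
    fix D x y U \<nu> C \<beta>
    assume xD: "x \<in> D" and yD: "y \<in> D" and xy: "x \<noteq> y"
      and zD: "\<forall>\<rho> :: 'n \<Rightarrow> nat. (\<forall>j. \<rho> j \<ge> 1) \<longrightarrow> y + (\<chi> j. (real (\<rho> j) * sdist s x y) ^ s j) \<in> D"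
      and germ: "is_germ D U" and ns: "germ_norm_set s \<eta> D U \<noteq> {}" and ss: "germ_semi_set s \<eta> \<alpha> D U \<noteq> {}"
      and C1: "C \<ge> 1"
      and hyp: "\<forall>z\<in>D. cmod (U x z - U y z - of_real (\<Sum>\<beta>\<in>midx s \<eta>. \<nu> \<beta> * mono_pow (z - y) \<beta>))
        \<le> C * germ_semi s \<eta> \<alpha> D U * sdist s y z powr \<alpha> * (sdist s x y + sdist s y z) powr (\<eta> - \<alpha>)"
      and \<beta>: "\<beta> \<in> midx s \<eta>"
    define \<delta> where "\<delta> = sdist s x y"
    define Nn where "Nn = germ_norm s \<eta> D U"
    define Sm where "Sm = germ_semi s \<eta> \<alpha> D U"
    have \<delta>0: "\<delta> > 0" unfolding \<delta>_def using xy by (rule sdist_pos)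
    have Nn0: "Nn \<ge> 0" unfolding Nn_def using ns by (rule norm_nonneg')
    have Sm0: "Sm \<ge> 0" unfolding Sm_def using ss by (rule semi_nonneg')
    have CS0: "C * Sm \<ge> 0" using C1 Sm0 by simp
    have \<eta>0: "\<eta> > 0" using assms by simp
    define A where "A = 2 * (Nn + C * Sm) * G * \<delta> powr \<eta>"
    have A0: "A \<ge> 0" unfolding A_def using Nn0 CS0 G0 by simp
    have main: "\<bar>\<Sum>\<beta>\<in>midx s \<eta>. (\<nu> \<beta> * \<delta> ^ sdeg s \<beta>) * \<phi> \<beta> t\<bar> \<le> A" if t: "t \<in> {1..T}" for t
    proof -
      define \<rho> where "\<rho> j = t ^ w j" for j
      define z where "z = y + (\<chi> j. (real (\<rho> j) * \<delta>) ^ s j)"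
      have \<rho>1: "\<forall>j. \<rho> j \<ge> 1" using t by (simp add: \<rho>_def)
      have zD': "z \<in> D" using zD \<rho>1 by (simp add: z_def \<delta>_def)
      have dyz: "sdist s y z = real (R t) * \<delta>"
      proof -
        have "\<bar>y $ i - z $ i\<bar> powr (1 / real (s i)) = real (\<rho> i) * \<delta>" for i
        proof -
          have "\<bar>y $ i - z $ i\<bar> = (real (\<rho> i) * \<delta>) ^ s i" using \<delta>0 by (simp add: z_def)
          then show ?thesis using \<delta>0 s1 by (simp add: pow_powr_inv)
        qed
        then have "sdist s y z = (\<Sum>i\<in>UNIV. real (\<rho> i) * \<delta>)" by (simp add: sdist_def)
        also have "\<dots> = real (R t) * \<delta>" by (simp add: R_def \<rho>_def sum_distrib_right)
        finally show ?thesis .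
      qed
      have mp: "mono_pow (z - y) \<gamma> = \<delta> ^ sdeg s \<gamma> * \<phi> \<gamma> t" for \<gamma>
      proof -
        have "mono_pow (z - y) \<gamma> = (\<Prod>i\<in>UNIV. real t ^ (w i * (s i * \<gamma> i)) * \<delta> ^ (s i * \<gamma> i))"
          unfolding mono_pow_def
        proof (rule prod.cong[OF refl])
          fix i
          have "(z - y) $ i = (real t ^ w i * \<delta>) ^ s i" by (simp add: z_def \<rho>_def)
          then show "(z - y) $ i ^ \<gamma> i = real t ^ (w i * (s i * \<gamma> i)) * \<delta> ^ (s i * \<gamma> i)"
            by (simp only: power_mult_distrib power_mult[symmetric] mult.assoc)
        qed
        also have "\<dots> = real t ^ (\<Sum>i\<in>UNIV. w i * (s i * \<gamma> i)) * \<delta> ^ (\<Sum>i\<in>UNIV. s i * \<gamma> i)"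
          by (simp only: prod.distrib power_sum)
        finally show ?thesis by (simp add: sdeg_def \<phi>_def e_def w_def)
      qed
      define P where "P = (\<Sum>\<beta>\<in>midx s \<eta>. \<nu> \<beta> * mono_pow (z - y) \<beta>)"
      have P: "P = (\<Sum>\<beta>\<in>midx s \<eta>. (\<nu> \<beta> * \<delta> ^ sdeg s \<beta>) * \<phi> \<beta> t)"
        unfolding P_def mp by (simp add: mult_ac)
      define b where "b = (1 + real (R t)) * \<delta>"
      have a_le_b: "real (R t) * \<delta> \<le> b" using \<delta>0 by (simp add: b_def algebra_simps)
      have a0: "real (R t) * \<delta> \<ge> 0" using \<delta>0 by simp
      have dxz: "sdist s x z \<le> b"
        using sdist_tri[OF s1, of x z y] dyz by (simp add: b_def \<delta>_def algebra_simps)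
      have bpow: "b powr \<eta> \<le> G * \<delta> powr \<eta>"
      proof -
        have "b powr \<eta> = (1 + real (R t)) powr \<eta> * \<delta> powr \<eta>" unfolding b_def using \<delta>0
          by (simp add: powr_mult)
        also have "\<dots> \<le> G * \<delta> powr \<eta>" using G[OF t] by (intro mult_right_mono) auto
        finally show ?thesis .
      qed
      have u1: "cmod (U x z) \<le> Nn * b powr \<eta>"
      proof -
        have "cmod (U x z) \<le> Nn * sdist s x z powr \<eta>" unfolding Nn_def by (rule inf_bound[OF ns xD zD'])
        also have "\<dots> \<le> Nn * b powr \<eta>" using dxz \<eta>0 Nn0
          by (intro mult_left_mono powr_mono2) (auto simp: sdist_nonneg)
        finally show ?thesis .
      qed
      have u2: "cmod (U y z) \<le> Nn * b powr \<eta>"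
      proof -
        have "cmod (U y z) \<le> Nn * sdist s y z powr \<eta>" unfolding Nn_def by (rule inf_bound[OF ns yD zD'])
        also have "\<dots> \<le> Nn * b powr \<eta>" using a_le_b a0 dyz \<eta>0 Nn0
          by (intro mult_left_mono powr_mono2) auto
        finally show ?thesis .
      qed
      have u3: "cmod (U x z - U y z - of_real P) \<le> C * Sm * b powr \<eta>"
      proof -
        have "cmod (U x z - U y z - of_real P) \<le> C * Sm * sdist s y z powr \<alpha> * (\<delta> + sdist s y z) powr (\<eta> - \<alpha>)"
          using hyp zD' by (simp add: P_def Sm_def \<delta>_def)
        also have "\<dots> = C * Sm * ((real (R t) * \<delta>) powr \<alpha> * (\<delta> + real (R t) * \<delta>) powr (\<eta> - \<alpha>))"
          by (simp add: dyz)
        also have "\<dots> \<le> C * Sm * (b powr \<alpha> * b powr (\<eta> - \<alpha>))"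
        proof (intro mult_left_mono CS0 mult_mono)
          show "(real (R t) * \<delta>) powr \<alpha> \<le> b powr \<alpha>" using a_le_b a0 assms by (intro powr_mono2) auto
          show "(\<delta> + real (R t) * \<delta>) powr (\<eta> - \<alpha>) \<le> b powr (\<eta> - \<alpha>)" using assms \<delta>0 a0
            by (simp add: b_def algebra_simps)
        qed auto
        also have "\<dots> = C * Sm * b powr \<eta>" by (simp add: powr_add[symmetric])
        finally show ?thesis .
      qed
      have "\<bar>P\<bar> = cmod (U x z - U y z - (U x z - U y z - of_real P))" by simp
      also have "\<dots> \<le> cmod (U x z) + cmod (U y z) + cmod (U x z - U y z - of_real P)"
        using norm_triangle_ineq4[of "U x z - U y z" "U x z - U y z - of_real P"] norm_triangle_ineq4[of "U x z" "U y z"] by linarith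
      also have "\<dots> \<le> (2 * Nn + C * Sm) * b powr \<eta>" using u1 u2 u3 by (simp add: algebra_simps)
      also have "\<dots> \<le> (2 * Nn + C * Sm) * (G * \<delta> powr \<eta>)" using bpow Nn0 CS0 by (intro mult_left_mono) auto
      also have "\<dots> \<le> A" unfolding A_def
        using mult_nonneg_nonneg[OF mult_nonneg_nonneg[OF CS0 G0] powr_ge_zero[of \<delta> \<eta>]]
        by (simp add: algebra_simps)
      finally show ?thesis using P by simp
    qed
    have "\<bar>\<nu> \<beta> * \<delta> ^ sdeg s \<beta>\<bar> \<le> K0 * A"
      using K0b[OF A0, of "\<lambda>\<beta>. \<nu> \<beta> * \<delta> ^ sdeg s \<beta>"] main \<beta> by blast
    then have "\<bar>\<nu> \<beta>\<bar> * \<delta> powr real (sdeg s \<beta>) \<le> K0 * A"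
      using \<delta>0 by (simp add: abs_mult powr_realpow)
    then have "\<bar>\<nu> \<beta>\<bar> \<le> K0 * A / \<delta> powr real (sdeg s \<beta>)"
      using \<delta>0 by (simp add: le_divide_eq)
    also have "\<dots> = 2 * K0 * G * (Nn + C * Sm) * \<delta> powr (\<eta> - real (sdeg s \<beta>))"
      using \<delta>0 by (simp add: A_def powr_diff)
    also have "\<dots> \<le> K * (Nn + C * Sm) * \<delta> powr (\<eta> - real (sdeg s \<beta>))"
      unfolding K_def using K0 Nn0 CS0 G0 by (intro mult_right_mono) auto
    finally show "\<bar>\<nu> \<beta>\<bar> \<le> K * (germ_norm s \<eta> D U + C * germ_semi s \<eta> \<alpha> D U) * sdist s x y powr (\<eta> - real (sdeg s \<beta>))"
      by (simp add: Nn_def Sm_def \<delta>_def)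
  qed
qed

end
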